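(* Let $\mathbf S,\mathbf M\in\mathbb R^{d\times d}$ be symmetric positive definite, $\mathbf T$ symmetric positive semi-definite, $\sigma>0$, $n\ge1$, and $\mathbf S'=\mathbf M^{-1/2}\mathbf S\mathbf M^{-1/2}$, $\mathbf T'=\mathbf M^{-1/2}\mathbf T\mathbf M^{-1/2}$. Then $$\sup_{\substack{\mathbf F\succ\mathbf 0\\ \operatorname{tr}\mathbf F\le 1/\pi^2}}\Big\langle\mathbf T',\Big(\mathbf F^{-1}+\frac{n\mathbf S'}{\sigma^2}\Big)^{-1}\Big\rangle=\inf_{\mathbf A\in\mathbb R^{d\times d}}\ \frac1{\pi^2}\big\|(\mathbf I-\mathbf A)^\top\mathbf T'(\mathbf I-\mathbf A)\big\|+\frac{\sigma^2}{n}\big\langle\mathbf T',\mathbf A(\mathbf S')^{-1}\mathbf A^\top\big\rangle .$$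
   Context: $\|\cdot\|$ denotes the spectral norm, $\langle\mathbf A,\mathbf B\rangle=\operatorname{tr}(\mathbf A^\top\mathbf B)$, and the supremum ranges over symmetric positive definite matrices $\mathbf F$ with trace (equivalently nuclear norm) at most $1/\pi^2$. *)

theory Defs
  imports "HOL-Analysis.Analysis"
begin

definition sym_mat :: "real^'n^'n \<Rightarrow> bool" where
  "sym_mat A \<longleftrightarrow> transpose A = A"

definition pos_def :: "real^'n^'n \<Rightarrow> bool" where
  "pos_def A \<longleftrightarrow> sym_mat A \<and> (\<forall>x. x \<noteq> 0 \<longrightarrow> x \<bullet> (A *v x) > 0)"

definition pos_semidef :: "real^'n^'n \<Rightarrow> bool" where
  "pos_semidef A \<longleftrightarrow> sym_mat A \<and> (\<forall>x. x \<bullet> (A *v x) \<ge> 0)"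

definition inv_sqrt :: "real^'n^'n \<Rightarrow> real^'n^'n" where
  "inv_sqrt M = (THE R. pos_def R \<and> R ** R = matrix_inv M)"

definition spec_norm :: "real^'n^'n \<Rightarrow> real" where
  "spec_norm A = onorm (\<lambda>x. A *v x)"

definition frob_inner :: "real^'n^'n \<Rightarrow> real^'n^'n \<Rightarrow> real" where
  "frob_inner A B = trace (transpose A ** B)"

end

theory Submission
  imports Defs
begin


lemma sym_inner: "sym_mat A \<Longrightarrow> x \<bullet> (A *v y) = (A *v x) \<bullet> (y::real^'n)"
  by (metis dot_lmul_matrix sym_mat_def transpose_matrix_vector)

lemma real_cs:
  fixes a b c :: real
  assumes "a \<ge> 0" "c \<ge> 0" "\<And>t. a + 2*t*b + t*t*c \<ge> 0"
  shows "b*b \<le> a*c"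
proof (cases "c = 0")
  case True
  show ?thesis
  proof (rule ccontr)
    assume "\<not> ?thesis" hence "b \<noteq> 0" using True by auto
    have "a + 2*(-(a+1)/(2*b))*b + (-(a+1)/(2*b))*(-(a+1)/(2*b))*c \<ge> 0" by (rule assms(3))
    with True \<open>b\<noteq>0\<close> show False by (simp add: field_simps)
  qed
next
  case False
  hence c: "c > 0" using assms by auto
  have "a + 2*(-b/c)*b + (-b/c)*(-b/c)*c \<ge> 0" by (rule assms(3))
  hence "0 \<le> (a*c - b*b)/c" using c by (simp add: field_simps power2_eq_square)
  thus ?thesis using c by (simp add: divide_nonneg_pos zero_le_divide_iff)
qed

lemma quad_expand:
  fixes D :: "real^'n^'n"
  assumes "sym_mat D"
  shows "(x + t *\<^sub>R y) \<bullet> (D *v (x + t *\<^sub>R y)) = x \<bullet> (D *v x) + 2*t*(x \<bullet> (D *v y)) + t*t*(y \<bullet> (D *v y))"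
proof -
  have "y \<bullet> (D *v x) = x \<bullet> (D *v y)" using sym_inner[OF assms, of y x] by (simp add: inner_commute)
  thus ?thesis by (simp add: matrix_vector_right_distrib matrix_vector_mult_scaleR inner_add inner_scaleR algebra_simps)
qed

lemma cont_rayleigh: "continuous_on S (\<lambda>x. x \<bullet> ((D::real^'n^'n) *v x))"
  by (intro continuous_intros linear_continuous_on matrix_vector_mul_bounded_linear)

lemma max_eigen:
  fixes D :: "real^'n^'n"
  assumes sym: "sym_mat D" and U: "subspace U" and inv: "\<forall>x\<in>U. D *v x \<in> U" and ne: "U \<noteq> {0}"
  shows "\<exists>v \<mu>. v \<in> U \<and> norm v = 1 \<and> D *v v = \<mu> *\<^sub>R v \<and> (\<forall>y\<in>U. y \<bullet> (D *v y) \<le> \<mu> * (y \<bullet> y))"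
proof -
  let ?S = "sphere 0 1 \<inter> U"
  have cS: "compact ?S" using U by (intro compact_Int_closed compact_sphere closed_subspace)
  obtain x where x: "x \<in> U" "x \<noteq> 0" using ne U subspace_0 by blast
  have "(1/norm x) *\<^sub>R x \<in> ?S" using x U by (auto simp: subspace_scale)
  hence neS: "?S \<noteq> {}" by blast
  obtain v where v: "v \<in> ?S" and vmax: "\<forall>y\<in>?S. y \<bullet> (D *v y) \<le> v \<bullet> (D *v v)"
    using continuous_attains_sup[OF cS neS cont_rayleigh] by blast
  define \<mu> where "\<mu> = v \<bullet> (D *v v)"
  have vU: "v \<in> U" and vn: "norm v = 1" using v by auto
  have vv: "v \<bullet> v = 1" using vn by (simp add: dot_square_norm)
  have bound: "y \<bullet> (D *v y) \<le> \<mu> * (y \<bullet> y)" if y: "y \<in> U" for y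
  proof (cases "y = 0")
    case True thus ?thesis by simp
  next
    case False
    let ?z = "(1/norm y) *\<^sub>R y"
    have "?z \<in> ?S" using y False U by (auto simp: subspace_scale)
    hence "?z \<bullet> (D *v ?z) \<le> \<mu>" using vmax \<mu>_def by blast
    hence "(y \<bullet> (D *v y)) / (norm y)^2 \<le> \<mu>"
      by (simp add: matrix_vector_mult_scaleR inner_scaleR power2_eq_square)
    hence "y \<bullet> (D *v y) \<le> \<mu> * (norm y)^2" using False by (simp add: divide_le_eq)
    thus ?thesis by (simp add: power2_norm_eq_inner)
  qed
  define b where "b = (\<lambda>x y. \<mu> * (x \<bullet> y) - x \<bullet> (D *v y))"
  have orth: "(\<mu> *\<^sub>R v - D *v v) \<bullet> y = 0" if y: "y \<in> U" for y
  proof -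
    have nn: "0 \<le> b (v + t *\<^sub>R y) (v + t *\<^sub>R y)" for t
      using bound[of "v + t *\<^sub>R y"] y vU U unfolding b_def by (simp add: subspace_add subspace_scale)
    have ex: "b (v + t *\<^sub>R y) (v + t *\<^sub>R y) = b v v + 2*t*b v y + t*t*b y y" for t
      unfolding b_def using quad_expand[OF sym, of v t y]
      by (simp add: inner_add inner_scaleR algebra_simps inner_commute) auto
    have bvv: "b v v = 0" unfolding b_def \<mu>_def using vv by simp
    have "b v y * b v y \<le> b v v * b y y"
    proof (rule real_cs)
      show "0 \<le> b v v" using bvv by simp
      show "0 \<le> b y y" using bound[OF y] by (simp add: b_def)
      show "0 \<le> b v v + 2*t*b v y + t*t*b y y" for t using nn[of t] ex[of t] by simp
    qed
    hence "b v y * b v y \<le> 0" using bvv by simp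
    hence "b v y * b v y = 0" using zero_le_square[of "b v y"] by linarith
    hence "b v y = 0" by simp
    moreover have "b v y = (\<mu> *\<^sub>R v - D *v v) \<bullet> y"
      unfolding b_def using sym_inner[OF sym, of v y] by (simp add: inner_diff_left)
    ultimately show ?thesis by simp
  qed
  have "\<mu> *\<^sub>R v - D *v v \<in> U" using vU inv U by (simp add: subspace_diff subspace_scale)
  from orth[OF this] have "D *v v = \<mu> *\<^sub>R v" by simp
  thus ?thesis using vU vn bound by blast
qed

lemma spectral_sub:
  fixes D :: "real^'n^'n"
  assumes sym: "sym_mat D"
  shows "subspace U \<Longrightarrow> (\<forall>x\<in>U. D *v x \<in> U) \<Longrightarrow> \<exists>B. B \<subseteq> U \<and> finite B \<and> pairwise orthogonal B \<and>
     (\<forall>b\<in>B. norm b = 1 \<and> D *v b = (b \<bullet> (D *v b)) *\<^sub>R b) \<and> U \<subseteq> span B"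
proof (induction "dim U" arbitrary: U rule: less_induct)
  case less
  show ?case
  proof (cases "U = {0}")
    case True then show ?thesis by (intro exI[of _ "{}"]) auto
  next
    case False
    obtain v \<mu> where v: "v \<in> U" "norm v = 1" "D *v v = \<mu> *\<^sub>R v"
      using max_eigen[OF sym less.prems False] by blast
    have vv: "v \<bullet> v = 1" using v(2) by (simp add: dot_square_norm)
    have mu: "v \<bullet> (D *v v) = \<mu>" using v(3) vv by (simp add: inner_scaleR_right)
    define U' where "U' = {x \<in> U. v \<bullet> x = 0}"
    have sU': "subspace U'" using less.prems(1) unfolding U'_def subspace_def
      by (auto simp: inner_add_right)
    have iU': "\<forall>x\<in>U'. D *v x \<in> U'"
    proof
      fix x assume x: "x \<in> U'"
      have "v \<bullet> (D *v x) = (D *v v) \<bullet> x" by (rule sym_inner[OF sym])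
      also have "\<dots> = 0" using x v(3) by (simp add: U'_def)
      finally show "D *v x \<in> U'" using x less.prems(2) by (simp add: U'_def)
    qed
    have "v \<notin> U'" using vv unfolding U'_def by auto
    hence "U' \<subset> U" using v(1) unfolding U'_def by blast
    hence "span U' \<subset> span U" using sU' less.prems(1) by (metis span_eq_iff)
    hence "dim U' < dim U" by (metis dim_psubset dim_span)
    from less.hyps[OF this sU' iU'] obtain B' where B': "B' \<subseteq> U'" "finite B'" "pairwise orthogonal B'"
      "\<forall>b\<in>B'. norm b = 1 \<and> D *v b = (b \<bullet> (D *v b)) *\<^sub>R b" "U' \<subseteq> span B'" by blast
    let ?B = "insert v B'"
    have "?B \<subseteq> U" using B'(1) v(1) U'_def by auto
    moreover have "finite ?B" using B' by simp
    moreover have "pairwise orthogonal ?B"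
      using B'(1,3) unfolding pairwise_insert U'_def orthogonal_def by (auto simp: inner_commute)
    moreover have "\<forall>b\<in>?B. norm b = 1 \<and> D *v b = (b \<bullet> (D *v b)) *\<^sub>R b" using B'(4) v mu by auto
    moreover have "U \<subseteq> span ?B"
    proof
      fix x assume x: "x \<in> U"
      have "x - (v \<bullet> x) *\<^sub>R v \<in> U'" using x v(1) vv less.prems(1) unfolding U'_def
        by (auto simp: subspace_diff subspace_scale inner_diff_right)
      hence "x - (v \<bullet> x) *\<^sub>R v \<in> span ?B" using B'(5) span_mono[of B' ?B] by blast
      moreover have "(v \<bullet> x) *\<^sub>R v \<in> span ?B" by (simp add: span_base span_scale)
      ultimately have "(x - (v \<bullet> x) *\<^sub>R v) + (v \<bullet> x) *\<^sub>R v \<in> span ?B" by (rule span_add)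
      thus "x \<in> span ?B" by simp
    qed
    ultimately show ?thesis by blast
  qed
qed

lemma onb_expand:
  fixes B :: "(real^'n) set"
  assumes "finite B" "pairwise orthogonal B" "\<forall>b\<in>B. norm b = 1" "x \<in> span B"
  shows "x = (\<Sum>b\<in>B. (b \<bullet> x) *\<^sub>R b)"
proof -
  have bb: "b \<bullet> b = 1" if "b \<in> B" for b using assms(3) that by (simp add: dot_square_norm)
  let ?y = "x - (\<Sum>b\<in>B. (b \<bullet> x / (b \<bullet> b)) *\<^sub>R b)"
  have "?y \<in> span B" using assms(4)
    by (simp add: span_diff span_sum span_scale span_base)
  from Gram_Schmidt_step[OF assms(2) this, of x] have "?y \<bullet> ?y = 0" by (simp add: orthogonal_def)
  hence "?y = 0" by simp
  moreover have "(\<Sum>b\<in>B. (b \<bullet> x / (b \<bullet> b)) *\<^sub>R b) = (\<Sum>b\<in>B. (b \<bullet> x) *\<^sub>R b)"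
    by (rule sum.cong) (auto simp: bb)
  ultimately show ?thesis by simp
qed

lemma spectral:
  fixes D :: "real^'n^'n"
  assumes sym: "sym_mat D"
  shows "\<exists>B. finite B \<and> pairwise orthogonal B \<and> (\<forall>b\<in>B. norm b = 1 \<and> D *v b = (b \<bullet> (D *v b)) *\<^sub>R b) \<and>
     (\<forall>x. x = (\<Sum>b\<in>B. (b \<bullet> x) *\<^sub>R b))"
proof -
  obtain B where B: "finite B" "pairwise orthogonal B" "\<forall>b\<in>B. norm b = 1 \<and> D *v b = (b \<bullet> (D *v b)) *\<^sub>R b"
    "UNIV \<subseteq> span B"
    using spectral_sub[OF sym, of UNIV] by auto
  thus ?thesis using onb_expand[OF B(1,2)] by blast
qed

lemma sym_from_inner:
  fixes A :: "real^'n^'n"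
  assumes "\<And>x y. x \<bullet> (A *v y) = (A *v x) \<bullet> y"
  shows "sym_mat A"
proof -
  have "transpose A *v x = A *v x" for x
  proof -
    have "(transpose A *v x - A *v x) \<bullet> y = 0" for y
      using assms[of x y] dot_lmul_matrix[of x A y] by (simp add: inner_diff_left)
    from this[of "transpose A *v x - A *v x"] show ?thesis by simp
  qed
  thus ?thesis unfolding sym_mat_def by (simp add: matrix_eq)
qed

lemma onb_coeff:
  fixes B :: "(real^'n) set"
  assumes "finite B" "pairwise orthogonal B" "\<forall>b\<in>B. norm b = 1" "b \<in> B"
  shows "b \<bullet> (\<Sum>c\<in>B. g c *\<^sub>R c) = g b"
proof -
  have "b \<bullet> (\<Sum>c\<in>B. g c *\<^sub>R c) = (\<Sum>c\<in>B. g c * (b \<bullet> c))" by (simp add: inner_sum_right)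
  also have "\<dots> = (\<Sum>c\<in>B. if c = b then g b else 0)"
  proof (rule sum.cong)
    fix c assume c: "c \<in> B"
    show "g c * (b \<bullet> c) = (if c = b then g b else 0)"
    proof (cases "c = b")
      case True thus ?thesis using assms(3,4) by (simp add: dot_square_norm)
    next
      case False thus ?thesis using assms(2,4) c by (simp add: pairwise_def orthogonal_def)
    qed
  qed simp
  also have "\<dots> = g b" using assms(1,4) by simp
  finally show ?thesis .
qed

lemma psd_sqrt:
  fixes P :: "real^'n^'n"
  assumes "pos_semidef P"
  shows "\<exists>R. pos_semidef R \<and> R ** R = P \<and> (pos_def P \<longrightarrow> pos_def R)"
proof -
  have sym: "sym_mat P" using assms by (simp add: pos_semidef_def)
  obtain B where B: "finite B" "pairwise orthogonal B" "\<forall>b\<in>B. norm b = 1"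
    "\<forall>b\<in>B. P *v b = (b \<bullet> (P *v b)) *\<^sub>R b" and ex: "\<And>x. x = (\<Sum>b\<in>B. (b \<bullet> x) *\<^sub>R b)"
    using spectral[OF sym] by blast
  define l where "l b = b \<bullet> (P *v b)" for b
  have l0: "l b \<ge> 0" for b using assms by (simp add: pos_semidef_def l_def)
  define f where "f x = (\<Sum>b\<in>B. (sqrt (l b) * (b \<bullet> x)) *\<^sub>R b)" for x
  have lin: "linear f" unfolding f_def
    by (intro linear_compose_sum) (auto intro!: linearI simp: inner_add_right algebra_simps scaleR_add_left)
  define R where "R = matrix f"
  have Rv: "R *v x = f x" for x unfolding R_def using matrix_works[of f] lin by (simp add: linear_matrix_vector_mul_eq)
  have coeff: "b \<bullet> f x = sqrt (l b) * (b \<bullet> x)" if "b \<in> B" for b x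
    unfolding f_def by (rule onb_coeff[OF B(1-3) that])
  have inner_f: "x \<bullet> f y = (\<Sum>b\<in>B. sqrt (l b) * (b \<bullet> x) * (b \<bullet> y))" for x y
    unfolding f_def by (simp add: inner_sum_right algebra_simps inner_commute)
  have symR: "sym_mat R"
    by (rule sym_from_inner) (simp add: Rv inner_f inner_commute[of "f _"] mult.commute mult.left_commute)
  have quadR: "x \<bullet> (R *v x) = (\<Sum>b\<in>B. sqrt (l b) * (b \<bullet> x)^2)" for x
    by (simp add: Rv inner_f power2_eq_square mult.assoc)
  have psdR: "pos_semidef R" unfolding pos_semidef_def using symR quadR l0
    by (simp add: sum_nonneg)
  have "R *v (R *v x) = P *v x" for x
  proof -
    have "R *v (R *v x) = (\<Sum>b\<in>B. (l b * (b \<bullet> x)) *\<^sub>R b)"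
      unfolding Rv f_def[of "f x"] using l0 by (intro sum.cong) (auto simp: coeff real_sqrt_mult[symmetric])
    also have "\<dots> = P *v x"
    proof -
      have "P *v x = P *v (\<Sum>b\<in>B. (b \<bullet> x) *\<^sub>R b)" using ex[of x] by simp
      also have "\<dots> = (\<Sum>b\<in>B. (b \<bullet> x) *\<^sub>R (P *v b))"
        by (simp add: linear_sum[OF matrix_vector_mul_linear] matrix_vector_mult_scaleR)
      also have "\<dots> = (\<Sum>b\<in>B. (l b * (b \<bullet> x)) *\<^sub>R b)"
      proof (rule sum.cong)
        fix b assume "b \<in> B"
        hence "P *v b = l b *\<^sub>R b" using B(4) by (simp add: l_def)
        thus "(b \<bullet> x) *\<^sub>R (P *v b) = (l b * (b \<bullet> x)) *\<^sub>R b" by (simp add: mult.commute)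
      qed simp
      finally show ?thesis by simp
    qed
    finally show ?thesis .
  qed
  hence RR: "R ** R = P" by (simp add: matrix_eq matrix_vector_mul_assoc)
  have "pos_def R" if pd: "pos_def P"
  proof -
    have lp: "l b > 0" if "b \<in> B" for b
      using pd B(3) that unfolding pos_def_def l_def by (metis norm_zero zero_neq_one)
    have "x \<bullet> (R *v x) > 0" if "x \<noteq> 0" for x
    proof -
      obtain b where b: "b \<in> B" "b \<bullet> x \<noteq> 0"
      proof (rule ccontr)
        assume "\<not> thesis" hence "\<forall>b\<in>B. b \<bullet> x = 0" using that by blast
        hence "x = 0" using ex[of x] by simp
        thus False using \<open>x \<noteq> 0\<close> by simp
      qed
      have "0 < sqrt (l b) * (b \<bullet> x)^2" using lp[OF b(1)] b(2) by simp
      also have "\<dots> \<le> (\<Sum>b\<in>B. sqrt (l b) * (b \<bullet> x)^2)"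
        using B(1) b(1) l0 by (intro member_le_sum) auto
      finally show ?thesis by (simp add: quadR)
    qed
    thus ?thesis using symR by (simp add: pos_def_def)
  qed
  thus ?thesis using psdR RR by blast
qed

lemma sym_nonzero_eigen:
  fixes D :: "real^'n^'n"
  assumes sym: "sym_mat D" and nz: "D \<noteq> 0"
  shows "\<exists>b l. norm b = 1 \<and> D *v b = l *\<^sub>R b \<and> l \<noteq> 0"
proof (rule ccontr)
  assume H: "\<not> ?thesis"
  obtain B where B: "finite B" "pairwise orthogonal B" "\<forall>b\<in>B. norm b = 1"
    "\<forall>b\<in>B. D *v b = (b \<bullet> (D *v b)) *\<^sub>R b" and ex: "\<And>x. x = (\<Sum>b\<in>B. (b \<bullet> x) *\<^sub>R b)"
    using spectral[OF sym] by blast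
  have z: "D *v b = 0" if "b \<in> B" for b
  proof -
    have e: "norm b = 1" "D *v b = (b \<bullet> (D *v b)) *\<^sub>R b" using B(3,4) that by auto
    hence "b \<bullet> (D *v b) = 0" using H by blast
    thus ?thesis using e(2) by simp
  qed
  have "D *v x = 0" for x
  proof -
    have "D *v x = D *v (\<Sum>b\<in>B. (b \<bullet> x) *\<^sub>R b)" by (rule arg_cong[OF ex])
    also have "\<dots> = (\<Sum>b\<in>B. (b \<bullet> x) *\<^sub>R (D *v b))"
      by (simp add: linear_sum[OF matrix_vector_mul_linear] matrix_vector_mult_scaleR)
    also have "\<dots> = 0" using z by simp
    finally show ?thesis .
  qed
  hence "D = 0" by (simp add: matrix_eq)
  thus False using nz by simp
qed

lemma pd_sqrt_unique:
  fixes R1 R2 :: "real^'n^'n"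
  assumes p1: "pos_def R1" and p2: "pos_def R2" and eq: "R1 ** R1 = R2 ** R2"
  shows "R1 = R2"
proof (rule ccontr)
  assume ne: "R1 \<noteq> R2"
  let ?D = "R1 - R2"
  have symD: "sym_mat ?D" using p1 p2 by (simp add: pos_def_def sym_mat_def transpose_def vec_eq_iff)
  obtain b l where b: "norm b = 1" "?D *v b = l *\<^sub>R b" "l \<noteq> 0"
    using sym_nonzero_eigen[OF symD] ne by auto
  have bnz: "b \<noteq> 0" using b(1) by auto
  have q1: "b \<bullet> (R1 *v b) > 0" and q2: "b \<bullet> (R2 *v b) > 0" using p1 p2 bnz by (auto simp: pos_def_def)
  have s2: "sym_mat R2" using p2 by (simp add: pos_def_def)
  have vv: "R1 *v (R1 *v b) = R2 *v (R2 *v b)" using eq by (simp add: matrix_vector_mul_assoc)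
  have "b \<bullet> (R1 *v (?D *v b)) + b \<bullet> (?D *v (R2 *v b)) = 0"
    using vv by (simp add: matrix_vector_mult_diff_rdistrib matrix_vector_mult_diff_distrib inner_diff_right)
  moreover have "b \<bullet> (?D *v (R2 *v b)) = (?D *v b) \<bullet> (R2 *v b)" by (rule sym_inner[OF symD])
  moreover have "b \<bullet> (R1 *v (?D *v b)) = l * (b \<bullet> (R1 *v b))" using b(2)
    by (simp add: matrix_vector_mult_scaleR)
  moreover have "(?D *v b) \<bullet> (R2 *v b) = l * (b \<bullet> (R2 *v b))" using b(2)
    by (simp add: inner_scaleR_left)
  ultimately have "l * (b \<bullet> (R1 *v b)) + l * (b \<bullet> (R2 *v b)) = 0" by simp
  hence "l * (b \<bullet> (R1 *v b) + b \<bullet> (R2 *v b)) = 0" by (simp add: algebra_simps)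
  thus False using b(3) q1 q2 by simp
qed

lemma inv_unique:
  fixes A B :: "real^'n^'n"
  assumes "A ** B = mat 1"
  shows "matrix_inv A = B" "B ** A = mat 1" "invertible A"
proof -
  show BA: "B ** A = mat 1" using assms matrix_left_right_inverse by blast
  have ex: "\<exists>A'. A ** A' = mat 1 \<and> A' ** A = mat 1" using assms BA by blast
  show "invertible A" using ex by (simp add: invertible_def)
  have "A ** matrix_inv A = mat 1 \<and> matrix_inv A ** A = mat 1"
    unfolding matrix_inv_def using someI_ex[OF ex] .
  hence "matrix_inv A = matrix_inv A ** (A ** B)" using assms by simp
  also have "\<dots> = B" using \<open>A ** matrix_inv A = mat 1 \<and> matrix_inv A ** A = mat 1\<close>
    by (simp add: matrix_mul_assoc)
  finally show "matrix_inv A = B" .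
qed

lemma inv_props:
  fixes A :: "real^'n^'n"
  assumes "invertible A"
  shows "A ** matrix_inv A = mat 1" "matrix_inv A ** A = mat 1"
proof -
  obtain B where "A ** B = mat 1" using assms by (auto simp: invertible_def)
  thus "A ** matrix_inv A = mat 1" "matrix_inv A ** A = mat 1" using inv_unique by metis+
qed

lemma pd_invertible:
  fixes M :: "real^'n^'n"
  assumes "pos_def M"
  shows "invertible M"
proof -
  have "\<forall>x. M *v x = 0 \<longrightarrow> x = 0" using assms unfolding pos_def_def by force
  thus ?thesis using matrix_left_invertible_ker invertible_left_inverse by blast
qed

lemma sym_inv:
  fixes M :: "real^'n^'n"
  assumes "sym_mat M" "invertible M"
  shows "sym_mat (matrix_inv M)"
proof -
  have "M ** transpose (matrix_inv M) = mat 1"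
    using inv_props(2)[OF assms(2)] assms(1)
    by (metis matrix_transpose_mul sym_mat_def transpose_mat)
  hence "matrix_inv M = transpose (matrix_inv M)" by (rule inv_unique)
  thus ?thesis by (simp add: sym_mat_def)
qed

lemma pd_inv:
  fixes M :: "real^'n^'n"
  assumes "pos_def M"
  shows "pos_def (matrix_inv M)"
proof -
  have inv: "invertible M" by (rule pd_invertible[OF assms])
  have sM: "sym_mat M" using assms by (simp add: pos_def_def)
  have "x \<bullet> (matrix_inv M *v x) > 0" if "x \<noteq> 0" for x
  proof -
    let ?y = "matrix_inv M *v x"
    have My: "M *v ?y = x" using inv_props(1)[OF inv] by (simp add: matrix_vector_mul_assoc)
    hence "?y \<noteq> 0" using that by auto
    hence "?y \<bullet> (M *v ?y) > 0" using assms by (simp add: pos_def_def)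
    thus ?thesis using My by (simp add: inner_commute)
  qed
  thus ?thesis using sym_inv[OF sM inv] by (simp add: pos_def_def)
qed

lemma pd_psd:
  fixes A :: "real^'n^'n"
  assumes "pos_def A" shows "pos_semidef A"
proof -
  have "0 \<le> x \<bullet> (A *v x)" for x
  proof (cases "x = 0")
    case False thus ?thesis using assms by (simp add: pos_def_def less_imp_le)
  qed simp
  thus ?thesis using assms by (simp add: pos_def_def pos_semidef_def)
qed

lemma inv_sqrt_props:
  fixes M :: "real^'n^'n"
  assumes "pos_def M"
  shows "pos_def (inv_sqrt M)" "inv_sqrt M ** inv_sqrt M = matrix_inv M"
proof -
  have pd: "pos_def (matrix_inv M)" by (rule pd_inv[OF assms])
  hence "pos_semidef (matrix_inv M)" by (rule pd_psd)
  then obtain R where R: "pos_def R" "R ** R = matrix_inv M" using psd_sqrt pd by blast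
  have "\<exists>!R. pos_def R \<and> R ** R = matrix_inv M"
  proof (rule ex1I[of _ R])
    show "pos_def R \<and> R ** R = matrix_inv M" using R by simp
    fix R' assume "pos_def R' \<and> R' ** R' = matrix_inv M"
    thus "R' = R" using pd_sqrt_unique[of R' R] R by simp
  qed
  hence "pos_def (inv_sqrt M) \<and> inv_sqrt M ** inv_sqrt M = matrix_inv M"
    unfolding inv_sqrt_def by (rule theI')
  thus "pos_def (inv_sqrt M)" "inv_sqrt M ** inv_sqrt M = matrix_inv M" by auto
qed



lemma frob: "trace (transpose A ** B) = A \<bullet> (B::real^'n^'n)"
  unfolding trace_def matrix_matrix_mult_def transpose_def inner_vec_def inner_real_def
  by (simp, subst sum.swap, simp add: mult.commute)

lemma frob_inner_eq: "frob_inner A B = A \<bullet> B"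
  by (simp add: frob_inner_def frob)

lemma inner_mult_left: fixes X A B :: "real^'n^'n" shows "X \<bullet> (A ** B) = (transpose A ** X) \<bullet> (B::real^'n^'n)"
proof -
  have "X \<bullet> (A ** B) = trace (transpose X ** (A ** B))" by (simp add: frob)
  also have "\<dots> = trace (transpose (transpose A ** X) ** B)"
    by (simp add: matrix_transpose_mul matrix_mul_assoc)
  also have "\<dots> = (transpose A ** X) \<bullet> B" by (simp add: frob)
  finally show ?thesis .
qed

lemma inner_mult_right: fixes X A B :: "real^'n^'n" shows "X \<bullet> (A ** B) = (X ** transpose B) \<bullet> (A::real^'n^'n)"
proof -
  have "X \<bullet> (A ** B) = trace (transpose X ** A ** B)" by (simp add: frob flip: matrix_mul_assoc)
  also have "\<dots> = trace (B ** (transpose X ** A))" by (simp add: trace_mul_sym[of _ B] matrix_mul_assoc)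
  also have "\<dots> = trace (B ** transpose X ** A)" by (simp add: matrix_mul_assoc)
  also have "\<dots> = (X ** transpose B) \<bullet> A" by (simp add: frob[symmetric] matrix_transpose_mul)
  finally show ?thesis .
qed

lemma trace_quad: "trace (X::real^'n^'n) = (\<Sum>i\<in>UNIV. axis i 1 \<bullet> (X *v axis i 1))"
  by (simp add: trace_def inner_axis' matrix_vector_mul_component inner_axis)

lemma trace_nonneg: "(\<And>x. x \<bullet> ((X::real^'n^'n) *v x) \<ge> 0) \<Longrightarrow> trace X \<ge> 0"
  by (simp add: trace_quad sum_nonneg)

lemma psd_cs:
  fixes P :: "real^'n^'n"
  assumes "pos_semidef P"
  shows "(x \<bullet> (P *v y)) * (x \<bullet> (P *v y)) \<le> (x \<bullet> (P *v x)) * (y \<bullet> (P *v y))"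
proof (rule real_cs)
  show "0 \<le> x \<bullet> (P *v x)" "0 \<le> y \<bullet> (P *v y)" using assms by (auto simp: pos_semidef_def)
  fix t
  have "0 \<le> (x + t *\<^sub>R y) \<bullet> (P *v (x + t *\<^sub>R y))" using assms by (simp add: pos_semidef_def)
  thus "0 \<le> x \<bullet> (P *v x) + 2 * t * (x \<bullet> (P *v y)) + t * t * (y \<bullet> (P *v y))"
    using quad_expand[of P x t y] assms by (simp add: pos_semidef_def)
qed

lemma quad_transpose: "x \<bullet> (transpose B *v z) = (B *v x) \<bullet> (z::real^'n)"
  for B :: "real^'n^'n"
proof -
  have "x \<bullet> (transpose B *v z) = (z v* B) \<bullet> x" by (simp add: inner_commute)
  also have "\<dots> = z \<bullet> (B *v x)" by (rule dot_lmul_matrix)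
  finally show ?thesis by (simp add: inner_commute)
qed

lemma psd_congr:
  fixes B Y :: "real^'n^'n"
  assumes "pos_semidef Y"
  shows "pos_semidef (transpose B ** Y ** B)"
proof -
  have s: "sym_mat Y" using assms by (simp add: pos_semidef_def)
  have "sym_mat (transpose B ** Y ** B)" using s
    by (simp add: sym_mat_def matrix_transpose_mul matrix_mul_assoc)
  moreover have "x \<bullet> ((transpose B ** Y ** B) *v x) \<ge> 0" for x
  proof -
    have "(transpose B ** Y ** B) *v x = transpose B *v (Y *v (B *v x))"
      by (simp add: matrix_vector_mul_assoc matrix_mul_assoc)
    hence "x \<bullet> ((transpose B ** Y ** B) *v x) = (B *v x) \<bullet> (Y *v (B *v x))"
      using quad_transpose[of x B] by simp
    thus ?thesis using assms by (simp add: pos_semidef_def)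
  qed
  ultimately show ?thesis by (simp add: pos_semidef_def)
qed

lemma psd_congr': "pos_semidef Y \<Longrightarrow> pos_semidef (B ** Y ** transpose B)"
  for B Y :: "real^'n^'n"
  using psd_congr[of Y "transpose B"] by simp

lemma psd_inner_nonneg:
  fixes X Y :: "real^'n^'n"
  assumes "pos_semidef X" "pos_semidef Y"
  shows "0 \<le> X \<bullet> Y"
proof -
  obtain R where R: "pos_semidef R" "R ** R = X" using psd_sqrt[OF assms(1)] by blast
  have sX: "transpose X = X" using assms(1) by (simp add: pos_semidef_def sym_mat_def)
  have sR: "transpose R = R" using R(1) by (simp add: pos_semidef_def sym_mat_def)
  have "X \<bullet> Y = trace (transpose X ** Y)" by (simp add: frob)
  also have "\<dots> = trace (X ** Y)" using sX by simp
  also have "\<dots> = trace (R ** (R ** Y))" using R(2) by (simp add: matrix_mul_assoc)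
  also have "\<dots> = trace ((R ** Y) ** R)" by (rule trace_mul_sym)
  also have "\<dots> = trace (transpose R ** Y ** R)" by (simp add: sR)
  also have "\<dots> \<ge> 0" using psd_congr[OF assms(2), of R] by (intro trace_nonneg) (simp add: pos_semidef_def)
  finally show ?thesis .
qed

lemma mat1_inner: "mat 1 \<bullet> F = trace (F::real^'n^'n)"
  by (simp add: frob[symmetric])

lemma sym_add[simp]: "sym_mat A \<Longrightarrow> sym_mat B \<Longrightarrow> sym_mat (A + B)"
  for A B :: "real^'n^'n" by (simp add: sym_mat_def transpose_def vec_eq_iff)
lemma sym_diff[simp]: "sym_mat A \<Longrightarrow> sym_mat B \<Longrightarrow> sym_mat (A - B)"
  for A B :: "real^'n^'n" by (simp add: sym_mat_def transpose_def vec_eq_iff)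
lemma sym_scale[simp]: "sym_mat A \<Longrightarrow> sym_mat (c *\<^sub>R A)"
  for A :: "real^'n^'n" by (simp add: sym_mat_def transpose_scalar)
lemma sym_mat1[simp]: "sym_mat (mat 1 :: real^'n^'n)"
  by (simp add: sym_mat_def)

lemma scaleR_mv: "(c *\<^sub>R A) *v x = c *\<^sub>R (A *v x)" for A :: "real^'n^'n"
  by (simp add: vec_eq_iff matrix_vector_mult_def sum_distrib_left mult.assoc)

lemma spec_norm_psd:
  fixes P :: "real^'n^'n"
  assumes psd: "pos_semidef P"
  shows "spec_norm P \<ge> 0" "\<exists>x. norm x = 1 \<and> x \<bullet> (P *v x) = spec_norm P"
    "\<And>y. y \<bullet> (P *v y) \<le> spec_norm P * (y \<bullet> y)"
proof -
  have sym: "sym_mat P" using psd by (simp add: pos_semidef_def)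
  obtain v \<mu> where v: "norm v = 1" "P *v v = \<mu> *\<^sub>R v" and bd: "\<forall>y. y \<bullet> (P *v y) \<le> \<mu> * (y \<bullet> y)"
    using max_eigen[OF sym, of UNIV] by auto
  have vv: "v \<bullet> v = 1" using v(1) by (simp add: dot_square_norm)
  have mu: "v \<bullet> (P *v v) = \<mu>" using v(2) vv by simp
  have mu0: "\<mu> \<ge> 0" using psd mu by (auto simp: pos_semidef_def)
  have nb: "norm (P *v y) \<le> \<mu> * norm y" for y
  proof -
    let ?z = "P *v y"
    have "y \<bullet> (P *v ?z) = ?z \<bullet> ?z" using sym_inner[OF sym, of y ?z] by simp
    hence "(?z \<bullet> ?z) * (?z \<bullet> ?z) \<le> (y \<bullet> (P *v y)) * (?z \<bullet> (P *v ?z))"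
      using psd_cs[OF psd, of y ?z] by simp
    also have "\<dots> \<le> (\<mu> * (y \<bullet> y)) * (\<mu> * (?z \<bullet> ?z))"
      using bd psd by (intro mult_mono) (auto simp: pos_semidef_def mu0)
    finally have "(?z \<bullet> ?z) * (?z \<bullet> ?z) \<le> (\<mu> * \<mu> * (y \<bullet> y)) * (?z \<bullet> ?z)"
      by (simp add: algebra_simps)
    hence "?z \<bullet> ?z \<le> \<mu> * \<mu> * (y \<bullet> y)"
      by (cases "?z = 0") auto
    moreover have "(\<mu> * norm y)^2 = \<mu>*\<mu>*(y \<bullet> y)"
      by (simp add: power_mult_distrib dot_square_norm power2_eq_square)
    moreover have "(norm ?z)^2 = ?z \<bullet> ?z" by (simp add: power2_norm_eq_inner)
    ultimately have "(norm ?z)^2 \<le> (\<mu> * norm y)^2" by linarith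
    thus ?thesis using mu0 by (simp add: power2_le_iff_abs_le)
  qed
  have le: "spec_norm P \<le> \<mu>" unfolding spec_norm_def by (rule onorm_le) (simp add: nb)
  have "norm (P *v v) / norm v \<le> spec_norm P" unfolding spec_norm_def by (rule le_onorm) simp
  hence ge: "\<mu> \<le> spec_norm P" using v mu0 by simp
  have eq: "spec_norm P = \<mu>" using le ge by simp
  show "spec_norm P \<ge> 0" using eq mu0 by simp
  show "\<exists>x. norm x = 1 \<and> x \<bullet> (P *v x) = spec_norm P" using v(1) mu eq by (intro exI[of _ v]) simp
  show "\<And>y. y \<bullet> (P *v y) \<le> spec_norm P * (y \<bullet> y)" using bd eq by simp
qed

lemma psd_trace_bound:
  fixes P F :: "real^'n^'n"
  assumes "pos_semidef P" "pos_semidef F"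
  shows "P \<bullet> F \<le> spec_norm P * trace F"
proof -
  let ?Q = "spec_norm P *\<^sub>R mat 1 - P"
  have "pos_semidef ?Q" using assms(1) spec_norm_psd(3)[OF assms(1)]
    by (auto simp: pos_semidef_def matrix_vector_mult_diff_rdistrib inner_diff_right scaleR_mv)
  hence "0 \<le> ?Q \<bullet> F" using assms(2) by (rule psd_inner_nonneg)
  thus ?thesis by (simp add: inner_diff_left mat1_inner)
qed

definition outer :: "real^'n \<Rightarrow> real^'n^'n" where
  "outer x = (\<chi> i j. x$i * x$j)"

lemma outer_mv: "outer x *v z = (x \<bullet> z) *\<^sub>R x"
  by (simp add: outer_def vec_eq_iff matrix_vector_mult_def inner_vec_def sum_distrib_left mult.commute mult.left_commute)

lemma outer_psd: "pos_semidef (outer x)"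
  by (simp add: pos_semidef_def sym_mat_def outer_def transpose_def vec_eq_iff outer_mv[unfolded outer_def]
      mult.commute inner_commute)

lemma outer_trace: "trace (outer x) = x \<bullet> x"
  by (simp add: outer_def trace_def inner_vec_def)

lemma outer_inner: "P \<bullet> outer x = x \<bullet> (P *v x)"
  by (simp add: outer_def inner_vec_def matrix_vector_mult_def sum_distrib_left mult.commute mult.left_commute)



lemma mm_diff_l: "(A::real^'n^'n) ** (B - C) = A ** B - A ** C"
  by (simp add: matrix_matrix_mult_def vec_eq_iff sum_subtractf right_diff_distrib)
lemma mm_diff_r: "((B::real^'n^'n) - C) ** A = B ** A - C ** A"
  by (simp add: matrix_matrix_mult_def vec_eq_iff sum_subtractf left_diff_distrib)
lemma mm_add_r: "((B::real^'n^'n) + C) ** A = B ** A + C ** A"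
  by (simp add: matrix_matrix_mult_def vec_eq_iff sum.distrib distrib_right)
lemma tr_diff: "transpose ((A::real^'n^'n) - B) = transpose A - transpose B"
  by (simp add: transpose_def vec_eq_iff)
lemma tr_add: "transpose ((A::real^'n^'n) + B) = transpose A + transpose B"
  by (simp add: transpose_def vec_eq_iff)
lemma mm_scale_l: "(c *\<^sub>R (A::real^'n^'n)) ** B = c *\<^sub>R (A ** B)"
  by (simp add: matrix_matrix_mult_def vec_eq_iff sum_distrib_left mult.assoc)
lemma mm_scale_r: "(A::real^'n^'n) ** (c *\<^sub>R B) = c *\<^sub>R (A ** B)"
  by (simp add: matrix_matrix_mult_def vec_eq_iff sum_distrib_left mult.left_commute)

lemmas mexp = mm_diff_l mm_diff_r mm_add_r matrix_add_ldistrib tr_diff tr_add matrix_transpose_mul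
  matrix_mul_assoc mm_scale_l mm_scale_r transpose_scalar

lemma key_identity:
  fixes A F G Gi :: "real^'n^'n"
  assumes GGi: "G ** Gi = mat 1" and GiG: "Gi ** G = mat 1" and sF: "transpose F = F" and sGi: "transpose Gi = Gi"
  shows "(mat 1 - A) ** F ** transpose (mat 1 - A) + A ** (G - F) ** transpose A
       = (A - F ** Gi) ** G ** transpose (A - F ** Gi) + (F - F ** Gi ** F)"
proof -
  have c1: "X ** G ** Gi = X" for X using GGi by (simp flip: matrix_mul_assoc)
  have c2: "X ** Gi ** G = X" for X using GiG by (simp flip: matrix_mul_assoc)
  show ?thesis by (simp add: mexp sF sGi c1 c2 GGi GiG algebra_simps)
qed

lemma trace_scale: "trace (c *\<^sub>R (A::real^'n^'n)) = c * trace A"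
  by (simp add: trace_def sum_distrib_left)

lemma psd_add: "pos_semidef A \<Longrightarrow> pos_semidef B \<Longrightarrow> pos_semidef (A + B)"
  for A B :: "real^'n^'n"
  by (simp add: pos_semidef_def matrix_vector_mult_add_rdistrib inner_add_right add_nonneg_nonneg)

lemma psd_scale: "a \<ge> 0 \<Longrightarrow> pos_semidef A \<Longrightarrow> pos_semidef (a *\<^sub>R A)"
  for A :: "real^'n^'n"
  by (simp add: pos_semidef_def scaleR_mv)

lemma pd_scale: "a > 0 \<Longrightarrow> pos_def A \<Longrightarrow> pos_def (a *\<^sub>R A)"
  for A :: "real^'n^'n"
  by (simp add: pos_def_def scaleR_mv)

lemma pd_add: "pos_semidef A \<Longrightarrow> pos_def B \<Longrightarrow> pos_def (A + B)"
  for A B :: "real^'n^'n"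
  by (simp add: pos_semidef_def pos_def_def matrix_vector_mult_add_rdistrib inner_add_right add_nonneg_pos)

lemma psd_sym: "pos_semidef A \<Longrightarrow> transpose A = A"
  by (simp add: pos_semidef_def sym_mat_def)

lemma pd_sym: "pos_def A \<Longrightarrow> transpose A = A"
  by (simp add: pos_def_def sym_mat_def)

lemma outer_product_psd: "pos_semidef (X ** transpose X)" for X :: "real^'n^'n"
  using psd_congr'[of "mat 1" X] by (simp add: pos_semidef_def sym_mat_def)

lemma pd_lower:
  fixes V :: "real^'n^'n"
  assumes "pos_def V"
  shows "\<exists>k>0. \<forall>y. k * (y \<bullet> y) \<le> y \<bullet> (V *v y)"
proof -
  have "sym_mat (- V)" using assms by (simp add: pos_def_def sym_mat_def transpose_def vec_eq_iff)
  from max_eigen[OF this, of UNIV] obtain v \<mu> where v: "norm v = 1" "(- V) *v v = \<mu> *\<^sub>R v"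
    and b: "\<forall>y. y \<bullet> ((- V) *v y) \<le> \<mu> * (y \<bullet> y)" by auto
  have neg: "(- V) *v y = - (V *v y)" for y by (simp add: vec_eq_iff matrix_vector_mult_def sum_negf)
  have vv: "v \<bullet> v = 1" using v(1) by (simp add: dot_square_norm)
  have "v \<bullet> ((- V) *v v) = \<mu>" using v(2) vv by simp
  hence "v \<bullet> (V *v v) = - \<mu>" using neg[of v] by simp
  moreover have "v \<noteq> 0" using v(1) by auto
  hence "v \<bullet> (V *v v) > 0" using assms by (auto simp: pos_def_def)
  ultimately have "- \<mu> > 0" by simp
  moreover have "\<forall>y. (-\<mu>) * (y \<bullet> y) \<le> y \<bullet> (V *v y)"
  proof
    fix y have "y \<bullet> ((- V) *v y) \<le> \<mu> * (y \<bullet> y)" using b by blast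
    hence "- (y \<bullet> (V *v y)) \<le> \<mu> * (y \<bullet> y)" using neg[of y] by simp
    thus "(-\<mu>) * (y \<bullet> y) \<le> y \<bullet> (V *v y)" by simp
  qed
  ultimately show ?thesis by blast
qed

lemma inner_transpose: "transpose A \<bullet> transpose B = A \<bullet> (B::real^'n^'n)"
proof -
  have "transpose A \<bullet> transpose B = trace (A ** transpose B)" by (simp add: frob[symmetric])
  also have "\<dots> = trace (transpose B ** A)" by (rule trace_mul_sym)
  also have "\<dots> = B \<bullet> A" by (rule frob)
  finally show ?thesis by (simp add: inner_commute)
qed

lemma amgm: fixes x y z :: real assumes "0 \<le> x" "0 \<le> y" "z * z \<le> x * y" shows "2 * z \<le> x + y"
proof -
  have "(2 * z)^2 \<le> (x + y)^2"
  proof -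
    have "(2*z)^2 = 4 * (z * z)" by (simp add: power2_eq_square)
    also have "\<dots> \<le> 4 * (x * y)" using assms(3) by simp
    also have "\<dots> \<le> (x + y)^2"
    proof -
      have h1: "(x+y)^2 = x^2 + y^2 + 2*x*y" by (rule power2_sum)
      have h2: "(x-y)^2 = x^2 + y^2 - 2*x*y" by (rule power2_diff)
      have h3: "0 \<le> (x-y)^2" by simp
      show ?thesis using h1 h2 h3 by linarith
    qed
    finally show ?thesis .
  qed
  moreover have "0 \<le> x + y" using assms(1,2) by simp
  ultimately show ?thesis by (rule power2_le_imp_le)
qed

context
  fixes S T :: "real^'d^'d" and N c :: real
  assumes S_pd: "pos_def S" and T_psd: "pos_semidef T" and N_pos: "N > 0" and c_pos: "c > 0"
begin

definition "VV = (1/N) *\<^sub>R matrix_inv S"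
definition "GI F = matrix_inv (F + VV)"
definition "PP A = transpose (mat 1 - A) ** T ** (mat 1 - A)"
definition "gg A = T \<bullet> (A ** VV ** transpose A)"
definition "phi F A = PP A \<bullet> F + gg A"
definition "hh A = c * spec_norm (PP A) + gg A"
definition "A0 F = F ** GI F"
definition "psi F = T \<bullet> (F - F ** GI F ** F)"
definition "KK = {F::real^'d^'d. pos_semidef F \<and> trace F \<le> c}"

lemma VV_pd: "pos_def VV"
  unfolding VV_def using N_pos by (intro pd_scale pd_inv S_pd) simp

lemma G_pd: "pos_semidef F \<Longrightarrow> pos_def (F + VV)"
  by (rule pd_add[OF _ VV_pd])

lemma GI_props:
  assumes "pos_semidef F"
  shows "(F + VV) ** GI F = mat 1" "GI F ** (F + VV) = mat 1" "transpose (GI F) = GI F"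
proof -
  have i: "invertible (F + VV)" by (rule pd_invertible[OF G_pd[OF assms]])
  show "(F + VV) ** GI F = mat 1" "GI F ** (F + VV) = mat 1" unfolding GI_def using inv_props[OF i] by auto
  show "transpose (GI F) = GI F" unfolding GI_def using sym_inv[OF _ i] G_pd[OF assms]
    by (simp add: pos_def_def sym_mat_def)
qed

lemma PP_psd: "pos_semidef (PP A)"
  unfolding PP_def by (rule psd_congr[OF T_psd])

lemma gg_nonneg: "gg A \<ge> 0"
  unfolding gg_def by (intro psd_inner_nonneg T_psd psd_congr' pd_psd VV_pd)

lemma PP_inner: "PP A \<bullet> F = T \<bullet> ((mat 1 - A) ** F ** transpose (mat 1 - A))"
proof -
  let ?B = "mat 1 - A"
  have "T \<bullet> ((?B ** F) ** transpose ?B) = (T ** ?B) \<bullet> (?B ** F)" by (simp add: inner_mult_right)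
  also have "\<dots> = (transpose ?B ** (T ** ?B)) \<bullet> F" by (simp add: inner_mult_left)
  finally show ?thesis unfolding PP_def by (simp add: matrix_mul_assoc)
qed

lemma decomp:
  assumes F: "pos_semidef F"
  shows "phi F A = psi F + T \<bullet> ((A - A0 F) ** (F + VV) ** transpose (A - A0 F))"
proof -
  have sF: "transpose F = F" using F by (rule psd_sym)
  note G = GI_props[OF F]
  have "phi F A = T \<bullet> ((mat 1 - A) ** F ** transpose (mat 1 - A) + A ** ((F + VV) - F) ** transpose A)"
    unfolding phi_def PP_inner gg_def by (simp add: inner_add_right)
  also have "\<dots> = T \<bullet> ((A - F ** GI F) ** (F + VV) ** transpose (A - F ** GI F) + (F - F ** GI F ** F))"
    using key_identity[OF G(1) G(2) sF G(3)] by simp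
  finally show ?thesis unfolding psi_def A0_def by (simp add: inner_add_right)
qed

lemma psi_le: "pos_semidef F \<Longrightarrow> psi F \<le> phi F A"
  using decomp[of F A] psd_inner_nonneg[OF T_psd psd_congr'[OF pd_psd[OF G_pd]]] by simp

lemma phi_A0: "pos_semidef F \<Longrightarrow> phi F (A0 F) = psi F"
  using decomp[of F "A0 F"] by (simp add: matrix_mul_lid)

lemma phi_le_hh: "F \<in> KK \<Longrightarrow> phi F A \<le> hh A"
proof -
  assume "F \<in> KK"
  hence F: "pos_semidef F" "trace F \<le> c" by (auto simp: KK_def)
  have "PP A \<bullet> F \<le> spec_norm (PP A) * trace F" by (rule psd_trace_bound[OF PP_psd F(1)])
  also have "\<dots> \<le> spec_norm (PP A) * c" using F(2) spec_norm_psd(1)[OF PP_psd] by (intro mult_left_mono)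
  finally show ?thesis unfolding phi_def hh_def by (simp add: mult.commute)
qed

lemma hh_attained: "\<exists>F\<in>KK. phi F A = hh A"
proof -
  obtain x where x: "norm x = 1" "x \<bullet> (PP A *v x) = spec_norm (PP A)" using spec_norm_psd(2)[OF PP_psd] by blast
  let ?F = "c *\<^sub>R outer x"
  have "?F \<in> KK" unfolding KK_def using c_pos x(1)
    by (auto intro!: psd_scale outer_psd simp: outer_trace trace_scale dot_square_norm)
  moreover have "phi ?F A = hh A" unfolding phi_def hh_def using x(2) by (simp add: outer_inner)
  ultimately show ?thesis by blast
qed

lemma psi_pd:
  assumes F: "pos_def F"
  shows "psi F = T \<bullet> matrix_inv (matrix_inv F + N *\<^sub>R S)"
proof -
  have Fp: "pos_semidef F" using F by (rule pd_psd)
  let ?G = "F + VV" and ?Gi = "GI F" and ?Fi = "matrix_inv F" and ?W = "N *\<^sub>R S"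
  note G = GI_props[OF Fp]
  have f1: "?Fi ** F = mat 1" using inv_props(2)[OF pd_invertible[OF F]] .
  have f2: "?W ** VV = mat 1" unfolding VV_def using N_pos inv_props(1)[OF pd_invertible[OF S_pd]]
    by (simp add: mm_scale_l mm_scale_r)
  have c1: "X ** ?G ** ?Gi = X" for X using G(1) by (simp flip: matrix_mul_assoc)
  have c2: "X ** ?Fi ** F = X" for X using f1 by (simp flip: matrix_mul_assoc)
  have c3: "X ** ?W ** VV = X" for X using f2 by (simp flip: matrix_mul_assoc)
  have f3: "X ** ?Gi ** F = X - X ** ?Gi ** VV" for X
  proof -
    have "X ** ?Gi ** F + X ** ?Gi ** VV = X ** (?Gi ** ?G)" by (simp add: mexp)
    thus ?thesis using G(2) by (simp add: algebra_simps)
  qed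
  have Feq: "F = ?G - VV" by simp
  have f4: "?W ** F ** ?Gi ** VV = mat 1 - ?Gi ** VV"
  proof -
    have "?W ** F ** ?Gi ** VV = ?W ** (?G - VV) ** ?Gi ** VV" by simp
    also have "\<dots> = ?W ** ?G ** ?Gi ** VV - ?W ** VV ** ?Gi ** VV" by (simp only: mm_diff_l mm_diff_r)
    also have "\<dots> = mat 1 - ?Gi ** VV" using c1[of ?W] f2 by (simp add: matrix_mul_assoc)
    finally show ?thesis .
  qed
  have "(?Fi + ?W) ** (F - F ** ?Gi ** F) = ?Fi ** F - ?Fi ** F ** ?Gi ** F + (?W ** F - ?W ** F ** ?Gi ** F)"
    by (simp add: mexp)
  also have "\<dots> = mat 1 - ?Gi ** F + (?W ** F - ?W ** F ** ?Gi ** F)" using f1 by simp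
  also have "\<dots> = mat 1 - (mat 1 - ?Gi ** VV) + (?W ** F - (?W ** F - ?W ** F ** ?Gi ** VV))"
    using f3[of "mat 1"] f3[of "?W ** F"] by simp
  also have "\<dots> = mat 1" using f4 by simp
  finally have "(?Fi + ?W) ** (F - F ** ?Gi ** F) = mat 1" .
  hence "matrix_inv (?Fi + ?W) = F - F ** ?Gi ** F" by (rule inv_unique)
  thus ?thesis unfolding psi_def by simp
qed

lemma phi_affine: "phi ((1 - t) *\<^sub>R F1 + t *\<^sub>R F2) A = (1 - t) * phi F1 A + t * phi F2 A"
  unfolding phi_def by (simp add: inner_add_right algebra_simps)

lemma phi_nonneg: "pos_semidef F \<Longrightarrow> phi F A \<ge> 0"
  unfolding phi_def using psd_inner_nonneg[OF PP_psd] gg_nonneg by (simp add: add_nonneg_nonneg)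

lemma psi_nonneg: "pos_semidef F \<Longrightarrow> psi F \<ge> 0"
  using phi_A0 phi_nonneg by metis

definition "E0 = (c / real CARD('d)) *\<^sub>R (mat 1 :: real^'d^'d)"

lemma mat1_pd: "pos_def (mat 1 :: real^'n^'n)"
  by (simp add: pos_def_def)

lemma E0_pd: "pos_def E0" and E0_trace: "trace E0 = c"
proof -
  show "pos_def E0" unfolding E0_def using c_pos by (intro pd_scale mat1_pd) simp
  show "trace E0 = c" unfolding E0_def by (simp add: trace_scale trace_I)
qed

definition "LS = {psi F | F. pos_def F \<and> trace F \<le> c}"
definition "LL = Sup LS"

lemma LS_ne: "LS \<noteq> {}"
  unfolding LS_def using E0_pd E0_trace by auto

lemma LS_bdd: "bdd_above LS"
proof -
  have "x \<le> hh 0" if "x \<in> LS" for x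
  proof -
    from that have "x \<in> {psi F | F. pos_def F \<and> trace F \<le> c}" by (simp add: LS_def)
    then obtain F where F: "x = psi F" "pos_def F" "trace F \<le> c" by blast
    have "F \<in> KK" using F pd_psd unfolding KK_def by auto
    hence "phi F 0 \<le> hh 0" by (rule phi_le_hh)
    moreover have "psi F \<le> phi F 0" using psi_le pd_psd[OF F(2)] by blast
    ultimately show ?thesis using F by simp
  qed
  thus ?thesis by (auto simp: bdd_above_def)
qed

lemma LS_upper: "pos_def F \<Longrightarrow> trace F \<le> c \<Longrightarrow> psi F \<le> LL"
  unfolding LL_def using LS_bdd by (intro cSup_upper) (auto simp: LS_def)

lemma LL_nonneg: "LL \<ge> 0"
  using LS_upper[OF E0_pd] E0_trace psi_nonneg[OF pd_psd[OF E0_pd]] by simp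

lemma psi_le_LL:
  assumes F: "F \<in> KK"
  shows "psi F \<le> LL"
proof -
  have Fp: "pos_semidef F" and Ft: "trace F \<le> c" using F by (auto simp: KK_def)
  have key: "(1 - t) * psi F \<le> LL" if t: "0 < t" "t \<le> 1" for t
  proof -
    let ?Ft = "(1 - t) *\<^sub>R F + t *\<^sub>R E0"
    have pd: "pos_def ?Ft" using t by (intro pd_add psd_scale Fp pd_scale E0_pd) auto
    have "trace ?Ft = (1 - t) * trace F + t * c" by (simp add: trace_add trace_scale E0_trace)
    also have "\<dots> \<le> (1 - t) * c + t * c" using Ft t by (intro add_right_mono mult_left_mono) auto
    finally have tr: "trace ?Ft \<le> c" by (simp add: algebra_simps)
    let ?A = "A0 ?Ft"
    have "psi ?Ft = phi ?Ft ?A" using phi_A0[OF pd_psd[OF pd]] by simp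
    also have "\<dots> = (1 - t) * phi F ?A + t * phi E0 ?A" by (rule phi_affine)
    also have "\<dots> \<ge> (1 - t) * psi F"
    proof -
      have "(1 - t) * psi F \<le> (1 - t) * phi F ?A" using t psi_le[OF Fp] by (intro mult_left_mono) auto
      moreover have "0 \<le> t * phi E0 ?A" using t phi_nonneg[OF pd_psd[OF E0_pd]] by simp
      ultimately show ?thesis by linarith
    qed
    finally show ?thesis using LS_upper[OF pd tr] by linarith
  qed
  show ?thesis
  proof (rule ccontr)
    assume "\<not> ?thesis"
    hence gt: "psi F > LL" by simp
    hence pos: "psi F > 0" using LL_nonneg by linarith
    define t where "t = (psi F - LL) / (2 * psi F)"
    have t0: "0 < t" using gt pos by (simp add: t_def)
    have t1: "t \<le> 1" using gt pos LL_nonneg by (simp add: t_def divide_le_eq)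
    have "(1 - t) * psi F = (psi F + LL) / 2" using pos by (simp add: t_def field_simps)
    hence "(psi F + LL) / 2 \<le> LL" using key[OF t0 t1] by simp
    thus False using gt by simp
  qed
qed

lemma entry_eq: "(F::real^'n^'n)$i$j = axis i 1 \<bullet> (F *v axis j 1)"
  by (simp add: inner_axis' matrix_vector_mul_component inner_axis)

lemma psd_entry_bound:
  fixes F :: "real^'n^'n"
  assumes F: "pos_semidef F" and tr: "trace F \<le> b"
  shows "\<bar>F$i$j\<bar> \<le> b"
proof -
  have d0: "F$k$k \<ge> 0" for k using F by (simp add: entry_eq pos_semidef_def)
  have dle: "F$k$k \<le> b" for k
  proof -
    have "F$k$k \<le> (\<Sum>l\<in>UNIV. F$l$l)" using d0 by (intro member_le_sum) auto
    thus ?thesis using tr by (simp add: trace_def)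
  qed
  have "F$i$j * F$i$j \<le> F$i$i * F$j$j"
    using psd_cs[OF F, of "axis i 1" "axis j 1"] by (simp add: entry_eq)
  also have "\<dots> \<le> b * b" using d0 dle by (intro mult_mono) (auto intro: order_trans)
  finally have "(F$i$j)^2 \<le> b^2" by (simp add: power2_eq_square)
  moreover have "b \<ge> 0" using d0[of i] dle[of i] by linarith
  ultimately show ?thesis using power2_le_iff_abs_le by blast
qed

lemma KK_bounded: "bounded KK"
proof -
  have "norm F \<le> real CARD('d) * (real CARD('d) * c)" if "F \<in> KK" for F
  proof -
    have F: "pos_semidef F" "trace F \<le> c" using that by (auto simp: KK_def)
    have "norm F \<le> (\<Sum>i\<in>UNIV. norm (F$i))" unfolding norm_vec_def by (rule L2_set_le_sum) simp
    also have "\<dots> \<le> of_nat (card (UNIV::'d set)) * (real CARD('d) * c)"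
    proof (rule sum_bounded_above)
      fix i :: 'd
      have "norm (F$i) \<le> (\<Sum>j\<in>UNIV. \<bar>F$i$j\<bar>)" by (rule norm_le_l1_cart)
      also have "\<dots> \<le> of_nat (card (UNIV::'d set)) * c" using psd_entry_bound[OF F] by (intro sum_bounded_above) auto
      finally show "norm (F$i) \<le> real CARD('d) * c" by simp
    qed
    finally show ?thesis by simp
  qed
  thus ?thesis unfolding bounded_iff by blast
qed

lemma KK_closed: "closed KK"
  unfolding closed_sequential_limits
proof (intro allI impI, elim conjE)
  fix X :: "nat \<Rightarrow> real^'d^'d" and l
  assume X: "\<forall>n. X n \<in> KK" and lim: "X \<longlonglongrightarrow> l"
  have Xp: "pos_semidef (X n)" "trace (X n) \<le> c" for n using X by (auto simp: KK_def)
  have ent: "(\<lambda>n. X n $ i $ j) \<longlonglongrightarrow> l $ i $ j" for i j by (intro tendsto_vec_nth lim)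
  have "l $ i $ j = l $ j $ i" for i j
  proof -
    have "(\<lambda>n. X n $ i $ j) = (\<lambda>n. X n $ j $ i)" using Xp(1)
      by (auto simp: pos_semidef_def sym_mat_def transpose_def vec_eq_iff fun_eq_iff)
    thus ?thesis using ent[of i j] ent[of j i] LIMSEQ_unique by metis
  qed
  hence sym: "sym_mat l" by (simp add: sym_mat_def transpose_def vec_eq_iff)
  have "0 \<le> x \<bullet> (l *v x)" for x
  proof -
    have "(\<lambda>n. X n \<bullet> outer x) \<longlonglongrightarrow> l \<bullet> outer x" by (intro tendsto_intros lim)
    moreover have "\<forall>n. 0 \<le> X n \<bullet> outer x" using Xp(1) by (simp add: outer_inner pos_semidef_def)
    ultimately have "0 \<le> l \<bullet> outer x" by (intro LIMSEQ_le_const) auto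
    thus ?thesis by (simp add: outer_inner)
  qed
  moreover have "trace l \<le> c"
  proof -
    have "(\<lambda>n. mat 1 \<bullet> X n) \<longlonglongrightarrow> mat 1 \<bullet> l" by (intro tendsto_intros lim)
    hence "mat 1 \<bullet> l \<le> c" using Xp(2) by (intro LIMSEQ_le_const2) (auto simp: mat1_inner)
    thus ?thesis by (simp add: mat1_inner)
  qed
  ultimately show "l \<in> KK" using sym by (simp add: KK_def pos_semidef_def)
qed

lemma KK_compact: "compact KK"
  using KK_bounded KK_closed by (simp add: compact_eq_bounded_closed)

lemma E0_KK: "E0 \<in> KK"
  using E0_pd E0_trace pd_psd by (auto simp: KK_def)

lemma maximizer: "\<exists>Fs\<in>KK. \<forall>F\<in>KK. psi F \<le> psi Fs"
proof -
  let ?P = "psi ` KK"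
  have ne: "?P \<noteq> {}" using E0_KK by blast
  have bdd: "bdd_above ?P" using psi_le_LL by (auto simp: bdd_above_def)
  define s where "s = Sup ?P"
  have "\<forall>k. \<exists>F. F \<in> KK \<and> s - inverse (real (Suc k)) < psi F"
  proof
    fix k
    have "s - inverse (real (Suc k)) < s" by simp
    from less_cSupD[OF ne this[unfolded s_def]] show "\<exists>F. F \<in> KK \<and> s - inverse (real (Suc k)) < psi F"
      unfolding s_def by blast
  qed
  then obtain X where X: "\<And>k. X k \<in> KK" "\<And>k. s - inverse (real (Suc k)) < psi (X k)"
    by metis
  obtain l r where l: "l \<in> KK" "strict_mono r" "(X \<circ> r) \<longlonglongrightarrow> l"
    using compact_imp_seq_compact[OF KK_compact] X(1) unfolding seq_compact_def by metis
  have sl: "s \<le> phi l A" for A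
  proof -
    have lim1: "(\<lambda>k. phi (X (r k)) A) \<longlonglongrightarrow> phi l A"
      unfolding phi_def using l(3) by (intro tendsto_intros) (simp add: o_def)
    have lim2: "(\<lambda>k. phi (X (r k)) A + inverse (real (Suc k))) \<longlonglongrightarrow> phi l A"
      using tendsto_add[OF lim1 LIMSEQ_inverse_real_of_nat] by simp
    have "s \<le> phi (X (r k)) A + inverse (real (Suc k))" for k
    proof -
      have kr: "k \<le> r k" using seq_suble[OF l(2)] by simp
      have "inverse (real (Suc (r k))) \<le> inverse (real (Suc k))" using kr by (simp add: le_imp_inverse_le)
      moreover have "psi (X (r k)) \<le> phi (X (r k)) A" using X(1) by (intro psi_le) (auto simp: KK_def)
      ultimately show ?thesis using X(2)[of "r k"] by linarith
    qed
    thus ?thesis using lim2 by (intro LIMSEQ_le_const) auto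
  qed
  have lp: "pos_semidef l" using l(1) by (simp add: KK_def)
  have "psi F \<le> psi l" if "F \<in> KK" for F
  proof -
    have "psi F \<le> s" unfolding s_def using bdd that by (intro cSup_upper) auto
    also have "\<dots> \<le> phi l (A0 l)" by (rule sl)
    also have "\<dots> = psi l" by (rule phi_A0[OF lp])
    finally show ?thesis .
  qed
  thus ?thesis using l(1) by blast
qed

definition "ip (X::real^'d^'d) Y = T \<bullet> (X ** transpose Y)"

lemma ip_sym: "ip X Y = ip Y X"
proof -
  have "ip X Y = transpose T \<bullet> transpose (X ** transpose Y)" unfolding ip_def by (simp add: inner_transpose)
  also have "\<dots> = ip Y X" unfolding ip_def using psd_sym[OF T_psd] by (simp add: matrix_transpose_mul)
  finally show ?thesis .
qed

lemma ip_nonneg: "ip X X \<ge> 0"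
  unfolding ip_def by (rule psd_inner_nonneg[OF T_psd outer_product_psd])

lemma ip_expand: "ip (X + t *\<^sub>R Y) (X + t *\<^sub>R Y) = ip X X + 2 * t * ip X Y + t * t * ip Y Y"
proof -
  have "ip (X + t *\<^sub>R Y) (X + t *\<^sub>R Y) = ip X X + t * ip X Y + t * ip Y X + t * t * ip Y Y"
    unfolding ip_def by (simp add: mexp inner_add_right algebra_simps)
  thus ?thesis using ip_sym[of Y X] by simp
qed

lemma ip_cs: "ip X Y * ip X Y \<le> ip X X * ip Y Y"
proof (rule real_cs[OF ip_nonneg ip_nonneg])
  fix t show "0 \<le> ip X X + 2 * t * ip X Y + t * t * ip Y Y"
    using ip_nonneg[of "X + t *\<^sub>R Y"] ip_expand[of X t Y] by simp
qed

lemma danskin: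
  assumes Fs: "Fs \<in> KK" and mx: "\<forall>F\<in>KK. psi F \<le> psi Fs" and F: "F \<in> KK"
  shows "phi F (A0 Fs) \<le> phi Fs (A0 Fs)"
proof -
  define As where "As = A0 Fs"
  define B where "B = mat 1 - As"
  define E where "E = F - Fs"
  define Y0 where "Y0 = B ** E"
  have Fsp: "pos_semidef Fs" "trace Fs \<le> c" and Fp: "pos_semidef F" "trace F \<le> c"
    using Fs F by (auto simp: KK_def)
  have sE: "transpose E = E" unfolding E_def using psd_sym[OF Fsp(1)] psd_sym[OF Fp(1)] by (simp add: tr_diff)
  define d where "d = phi F As - phi Fs As"
  have d_eq: "d = T \<bullet> (B ** E ** transpose B)"
    unfolding d_def phi_def E_def B_def by (simp add: PP_inner inner_diff_right mexp)
  obtain k where k: "k > 0" "\<forall>y. k * (y \<bullet> y) \<le> y \<bullet> (VV *v y)" using pd_lower[OF VV_pd] by blast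
  have VVk: "pos_semidef (VV - k *\<^sub>R mat 1)"
    using VV_pd k(2) by (auto simp: pos_semidef_def pos_def_def matrix_vector_mult_diff_rdistrib inner_diff_right scaleR_mv)
  define C where "C = ip Y0 Y0"
  have C0: "C \<ge> 0" unfolding C_def by (rule ip_nonneg)
  have step: "t * d \<le> t * t * C / k" if t: "0 < t" "t \<le> 1" for t
  proof -
    define Ft where "Ft = Fs + t *\<^sub>R E"
    have Ft_eq: "Ft = (1 - t) *\<^sub>R Fs + t *\<^sub>R F" unfolding Ft_def E_def by (simp add: algebra_simps)
    have Ftp: "pos_semidef Ft" unfolding Ft_eq using t by (intro psd_add psd_scale Fsp(1) Fp(1)) auto
    have "trace Ft = (1 - t) * trace Fs + t * trace F" unfolding Ft_eq by (simp add: trace_add trace_scale)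
    also have "\<dots> \<le> (1 - t) * c + t * c" using t Fsp(2) Fp(2) by (intro add_mono mult_left_mono) auto
    finally have "trace Ft \<le> c" by (simp add: algebra_simps)
    hence FtK: "Ft \<in> KK" using Ftp by (simp add: KK_def)
    define A' where "A' = A0 Ft"
    define D where "D = A' - As"
    define q where "q = ip D D"
    define b where "b = ip D Y0"
    have le1: "psi Ft \<le> psi Fs" using mx FtK by blast
    have e1: "psi Ft = phi Ft A'" unfolding A'_def using phi_A0[OF Ftp] by simp
    have e2: "phi Ft A' = phi Fs A' + t * (PP A' \<bullet> E)"
      unfolding phi_def Ft_def by (simp add: inner_add_right algebra_simps)
    have e3: "phi Fs A' = psi Fs + T \<bullet> (D ** (Fs + VV) ** transpose D)"
      unfolding D_def As_def using decomp[OF Fsp(1)] by simp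
    have IA: "mat 1 - A' = B - D" unfolding B_def D_def by simp
    have e4: "PP A' \<bullet> E = d - 2 * b + T \<bullet> (D ** E ** transpose D)"
    proof -
      have "PP A' \<bullet> E = T \<bullet> ((B - D) ** E ** transpose (B - D))" unfolding PP_inner IA ..
      also have "\<dots> = T \<bullet> (B ** E ** transpose B) - ip Y0 D - ip D Y0 + T \<bullet> (D ** E ** transpose D)"
        unfolding ip_def Y0_def by (simp add: mexp sE inner_diff_right inner_add_right)
      finally show ?thesis using ip_sym[of Y0 D] by (simp add: d_eq b_def)
    qed
    have e5: "T \<bullet> (D ** (Fs + VV) ** transpose D) + t * (T \<bullet> (D ** E ** transpose D))
        = T \<bullet> (D ** Ft ** transpose D) + T \<bullet> (D ** (VV - k *\<^sub>R mat 1) ** transpose D) + k * q"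
      unfolding Ft_def q_def ip_def by (simp add: mexp inner_add_right inner_diff_right algebra_simps)
    have n1: "T \<bullet> (D ** Ft ** transpose D) \<ge> 0" by (rule psd_inner_nonneg[OF T_psd psd_congr'[OF Ftp]])
    have n2: "T \<bullet> (D ** (VV - k *\<^sub>R mat 1) ** transpose D) \<ge> 0" by (rule psd_inner_nonneg[OF T_psd psd_congr'[OF VVk]])
    have cs: "b * b \<le> q * C" unfolding b_def q_def C_def by (rule ip_cs)
    have q0: "q \<ge> 0" unfolding q_def by (rule ip_nonneg)
    have am: "2 * (t * b) \<le> k * q + t * t * C / k"
    proof (rule amgm)
      show "0 \<le> k * q" using k q0 by simp
      show "0 \<le> t * t * C / k" using k C0 by simp
      have "(t * b) * (t * b) = t * t * (b * b)" by simp
      also have "\<dots> \<le> t * t * (q * C)" using cs by (intro mult_left_mono) auto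
      also have "\<dots> = (k * q) * (t * t * C / k)" using k by (simp add: field_simps)
      finally show "(t * b) * (t * b) \<le> (k * q) * (t * t * C / k)" .
    qed
    have "psi Ft = psi Fs + T \<bullet> (D ** Ft ** transpose D) + T \<bullet> (D ** (VV - k *\<^sub>R mat 1) ** transpose D) + k * q + t * d - 2 * (t * b)"
      using e1 e2 e3 e4 e5 by (simp add: algebra_simps)
    thus ?thesis using le1 n1 n2 am by linarith
  qed
  have "d \<le> 0"
  proof (rule ccontr)
    assume "\<not> d \<le> 0"
    hence dp: "d > 0" by simp
    define t where "t = min 1 (d * k / (2 * C + 1))"
    have t0: "0 < t" using dp k C0 by (simp add: t_def)
    have t1: "t \<le> 1" by (simp add: t_def)
    have eq: "t * t * C / k = t * (t * C / k)" by simp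
    have "t * d \<le> t * (t * C / k)" using step[OF t0 t1] eq by linarith
    hence "d \<le> t * C / k" using t0 by (rule mult_left_le_imp_le)
    also have "\<dots> \<le> (d * k / (2 * C + 1)) * C / k" using C0 k by (intro divide_right_mono mult_right_mono) (auto simp: t_def)
    also have "\<dots> = d * C / (2 * C + 1)" using k by simp
    also have "\<dots> < d" using dp C0 by (simp add: divide_less_eq)
    finally show False by simp
  qed
  thus ?thesis unfolding d_def As_def by simp
qed

lemma core:
  "Sup {T \<bullet> matrix_inv (matrix_inv F + N *\<^sub>R S) | F. pos_def F \<and> trace F \<le> c}
   = Inf {c * spec_norm (transpose (mat 1 - A) ** T ** (mat 1 - A)) + (1/N) * (T \<bullet> (A ** matrix_inv S ** transpose A)) | A. True}"
proof -
  have L: "{T \<bullet> matrix_inv (matrix_inv F + N *\<^sub>R S) | F. pos_def F \<and> trace F \<le> c} = LS"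
    unfolding LS_def using psi_pd by (auto; metis)
  have hh_eq: "hh A = c * spec_norm (transpose (mat 1 - A) ** T ** (mat 1 - A)) + (1/N) * (T \<bullet> (A ** matrix_inv S ** transpose A))" for A
    unfolding hh_def PP_def gg_def VV_def by (simp add: mm_scale_l mm_scale_r)
  have R: "{c * spec_norm (transpose (mat 1 - A) ** T ** (mat 1 - A)) + (1/N) * (T \<bullet> (A ** matrix_inv S ** transpose A)) | A. True}
     = range hh" using hh_eq by auto
  have low: "LL \<le> hh A" for A
    unfolding LL_def
  proof (rule cSup_least[OF LS_ne])
    fix x assume "x \<in> LS"
    hence "x \<in> {psi F | F. pos_def F \<and> trace F \<le> c}" by (simp add: LS_def)
    then obtain F where F: "x = psi F" "pos_def F" "trace F \<le> c" by blast
    have FK: "F \<in> KK" using F pd_psd by (auto simp: KK_def)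
    have "psi F \<le> phi F A" by (rule psi_le[OF pd_psd[OF F(2)]])
    also have "\<dots> \<le> hh A" by (rule phi_le_hh[OF FK])
    finally show "x \<le> hh A" using F by simp
  qed
  obtain Fs where Fs: "Fs \<in> KK" "\<forall>F\<in>KK. psi F \<le> psi Fs" using maximizer by blast
  obtain F1 where F1: "F1 \<in> KK" "phi F1 (A0 Fs) = hh (A0 Fs)" using hh_attained by blast
  have "hh (A0 Fs) \<le> LL"
  proof -
    have "hh (A0 Fs) = phi F1 (A0 Fs)" using F1 by simp
    also have "\<dots> \<le> phi Fs (A0 Fs)" by (rule danskin[OF Fs(1) Fs(2) F1(1)])
    also have "\<dots> = psi Fs" using Fs(1) by (intro phi_A0) (simp add: KK_def)
    also have "\<dots> \<le> LL" by (rule psi_le_LL[OF Fs(1)])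
    finally show ?thesis .
  qed
  hence eq: "hh (A0 Fs) = LL" using low[of "A0 Fs"] by simp
  have "Inf (range hh) = hh (A0 Fs)"
  proof (rule cInf_eq_minimum)
    show "hh (A0 Fs) \<in> range hh" by simp
    fix x assume "x \<in> range hh"
    thus "hh (A0 Fs) \<le> x" using eq low by auto
  qed
  hence "Inf (range hh) = LL" using eq by simp
  thus ?thesis unfolding L R LL_def by simp
qed

end


lemma pd_congr:
  fixes B Y :: "real^'n^'n"
  assumes Y: "pos_def Y" and inj: "\<And>x. B *v x = 0 \<Longrightarrow> x = 0"
  shows "pos_def (transpose B ** Y ** B)"
proof -
  have s: "sym_mat Y" using Y by (simp add: pos_def_def)
  have "sym_mat (transpose B ** Y ** B)" using s
    by (simp add: sym_mat_def matrix_transpose_mul matrix_mul_assoc)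
  moreover have "x \<bullet> ((transpose B ** Y ** B) *v x) > 0" if "x \<noteq> 0" for x
  proof -
    have "(transpose B ** Y ** B) *v x = transpose B *v (Y *v (B *v x))"
      by (simp add: matrix_vector_mul_assoc matrix_mul_assoc)
    hence "x \<bullet> ((transpose B ** Y ** B) *v x) = (B *v x) \<bullet> (Y *v (B *v x))"
      using quad_transpose[of x B] by simp
    moreover have "B *v x \<noteq> 0" using inj that by blast
    ultimately show ?thesis using Y by (simp add: pos_def_def)
  qed
  ultimately show ?thesis by (simp add: pos_def_def)
qed

theorem theorem3:
  fixes S M T :: "real^'d^'d" and \<sigma> :: real and n :: nat
  assumes "pos_def S" and "pos_def M" and "pos_semidef T"
    and "\<sigma> > 0" and "n \<ge> 1"
  defines "S' \<equiv> inv_sqrt M ** S ** inv_sqrt M"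
    and "T' \<equiv> inv_sqrt M ** T ** inv_sqrt M"
  shows "Sup {frob_inner T' (matrix_inv (matrix_inv F + (real n / \<sigma>\<^sup>2) *\<^sub>R S')) | F.
               pos_def F \<and> trace F \<le> 1 / pi\<^sup>2}
       = Inf {(1 / pi\<^sup>2) * spec_norm (transpose (mat 1 - A) ** T' ** (mat 1 - A))
               + (\<sigma>\<^sup>2 / real n) * frob_inner T' (A ** matrix_inv S' ** transpose A) | A.
               True}"
proof -
  let ?R = "inv_sqrt M"
  have Rpd: "pos_def ?R" by (rule inv_sqrt_props(1)[OF assms(2)])
  have sR: "transpose ?R = ?R" by (rule pd_sym[OF Rpd])
  have injR: "?R *v x = 0 \<Longrightarrow> x = 0" for x using Rpd unfolding pos_def_def by force
  have "pos_def (transpose ?R ** S ** ?R)" using pd_congr[OF assms(1), of ?R] injR by blast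
  hence S'pd: "pos_def S'" unfolding S'_def using sR by simp
  have T'psd: "pos_semidef T'" unfolding T'_def using psd_congr[OF assms(3), of ?R] sR by simp
  have Npos: "real n / \<sigma>\<^sup>2 > 0" using assms(4,5) by simp
  have cpos: "1 / pi\<^sup>2 > 0" by simp
  have inv: "\<sigma>\<^sup>2 / real n = 1 / (real n / \<sigma>\<^sup>2)" by simp
  show ?thesis
    unfolding frob_inner_eq inv
    by (rule core[OF S'pd T'psd Npos cpos])
qed


end
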